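(* Let $\gamma>0$ with $\gamma\neq1$, $\nu=l+n/2-1$ with $l\ge0$ an integer and $n\ge2$, and $F_\nu(\lambda)=\gamma J_\nu(\lambda)J_\nu'(\gamma\lambda)-J_\nu(\gamma\lambda)J_\nu'(\lambda)$. Then every zero $\lambda_0\neq0$ of $F_\nu$ has multiplicity one or three. The multiplicity is three if and only if $J_\nu(\lambda_0)=J_\nu(\gamma\lambda_0)=0$, and in that case $\lambda_0$ is real.
   Context: $J_\nu$ denotes the Bessel function of the first kind of order $\nu$. *)

theory Defs
  imports "HOL-Analysis.Analysis"
begin

text \<open>Branch of z powr nu that agrees with the principal branch at the base point c
  and is holomorphic in a neighbourhood of c (cut along the ray opposite to c).\<close>
definition cpow_br :: "complex \<Rightarrow> real \<Rightarrow> complex \<Rightarrow> complex" where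
  "cpow_br c \<nu> z = exp (complex_of_real \<nu> * (Ln c + Ln (z / c)))"

definition bessel_J_br :: "complex \<Rightarrow> real \<Rightarrow> complex \<Rightarrow> complex" where
  "bessel_J_br c \<nu> z =
     cpow_br c \<nu> z / complex_of_real (2 powr \<nu>) *
     (\<Sum>k. (-1) ^ k * (z / 2) ^ (2 * k) /
            (fact k * complex_of_real (Gamma (\<nu> + real k + 1))))"

text \<open>Principal-branch value of J_nu.\<close>
definition bessel_J :: "real \<Rightarrow> complex \<Rightarrow> complex" where
  "bessel_J \<nu> z = bessel_J_br z \<nu> z"

definition F_br :: "complex \<Rightarrow> real \<Rightarrow> real \<Rightarrow> complex \<Rightarrow> complex" where
  "F_br c \<gamma> \<nu> w =
     complex_of_real \<gamma> * bessel_J_br c \<nu> w *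
       deriv (bessel_J_br (of_real \<gamma> * c) \<nu>) (of_real \<gamma> * w)
     - bessel_J_br (of_real \<gamma> * c) \<nu> (of_real \<gamma> * w) * deriv (bessel_J_br c \<nu>) w"

definition zero_mult :: "(complex \<Rightarrow> complex) \<Rightarrow> complex \<Rightarrow> nat \<Rightarrow> bool" where
  "zero_mult f z0 m \<longleftrightarrow> (\<forall>k<m. (deriv ^^ k) f z0 = 0) \<and> (deriv ^^ m) f z0 \<noteq> 0"

end

theory Submission imports Defs begin

definition bco :: "real \<Rightarrow> nat \<Rightarrow> real" where
  "bco \<nu> k = (-1)^k / (4^k * fact k * Gamma (\<nu> + real k + 1))"

lemma bco_rec:
  assumes "\<nu> \<ge> 0"
  shows "bco \<nu> (Suc k) = - bco \<nu> k / (4 * (real k + 1) * (\<nu> + real k + 1))"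
proof -
  have g: "Gamma (\<nu> + real (Suc k) + 1) = (\<nu> + real k + 1) * Gamma (\<nu> + real k + 1)"
  proof -
    have "\<nu> + real k + 1 \<notin> \<int>\<^sub>\<le>\<^sub>0" using assms
      by (metis add_nonneg_pos nonpos_Ints_nonpos not_le of_nat_0_le_iff zero_less_one add_nonneg_nonneg)
    from Gamma_plus1[OF this] show ?thesis by (simp add: add_ac)
  qed
  have "Gamma (\<nu> + real k + 1) > 0" using assms by (intro Gamma_real_pos) auto
  then show ?thesis unfolding bco_def g
    by (simp add: field_simps)
qed

lemma bco_summable:
  assumes "\<nu> \<ge> 0"
  shows "summable (\<lambda>k. of_real (bco \<nu> k) * (u::'a::{real_normed_field,banach}) ^ k)"
proof (rule summable_ratio_test[of "1/2" "nat \<lceil>norm u\<rceil>"])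
  fix k assume k: "k \<ge> nat \<lceil>norm u\<rceil>"
  have nk: "norm u \<le> real k" using k by linarith
  have d1: "4 * (real k + 1) \<ge> 2 * norm u" using nk by simp
  have d2: "\<nu> + real k + 1 \<ge> 1" using assms by simp
  have d: "4 * (real k + 1) * (\<nu> + real k + 1) \<ge> 2 * norm u"
    using mult_mono[OF d1 d2] by simp
  have pos: "4 * (real k + 1) * (\<nu> + real k + 1) > 0" using assms by auto
  have "norm (of_real (bco \<nu> (Suc k)) * u ^ Suc k :: 'a) = \<bar>bco \<nu> k\<bar> * norm u ^ k * (norm u / (4 * (real k + 1) * (\<nu> + real k + 1)))"
  proof -
    have "norm (of_real (bco \<nu> (Suc k)) * u ^ Suc k :: 'a) = \<bar>bco \<nu> (Suc k)\<bar> * (norm u ^ k * norm u)"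
      by (simp add: norm_mult norm_power)
    also have "\<bar>bco \<nu> (Suc k)\<bar> = \<bar>bco \<nu> k\<bar> / (4 * (real k + 1) * (\<nu> + real k + 1))"
      using pos by (simp add: bco_rec[OF assms] abs_divide)
    finally show ?thesis by simp
  qed
  also have "\<dots> \<le> \<bar>bco \<nu> k\<bar> * norm u ^ k * (1/2)"
    using d pos by (intro mult_left_mono) (auto simp: field_simps)
  also have "\<dots> = 1/2 * norm (of_real (bco \<nu> k) * u ^ k :: 'a)"
    by (simp add: norm_mult norm_power)
  finally show "norm (of_real (bco \<nu> (Suc k)) * u ^ Suc k :: 'a) \<le> 1/2 * norm (of_real (bco \<nu> k) * u ^ k :: 'a)" .
qed simp

definition cf :: "real \<Rightarrow> nat \<Rightarrow> complex" where "cf \<nu> k = of_real (bco \<nu> k)"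
definition GG :: "real \<Rightarrow> complex \<Rightarrow> complex" where "GG \<nu> u = (\<Sum>k. cf \<nu> k * u^k)"
definition GG1 :: "real \<Rightarrow> complex \<Rightarrow> complex" where "GG1 \<nu> u = (\<Sum>k. diffs (cf \<nu>) k * u^k)"
definition GG2 :: "real \<Rightarrow> complex \<Rightarrow> complex" where "GG2 \<nu> u = (\<Sum>k. diffs (diffs (cf \<nu>)) k * u^k)"

context fixes \<nu> :: real assumes nu0: "\<nu> \<ge> 0"
begin

lemma cf_summ: "summable (\<lambda>k. cf \<nu> k * u^k)"
  unfolding cf_def by (rule bco_summable[OF nu0])

lemma cf_summ1: "summable (\<lambda>k. diffs (cf \<nu>) k * u^k)"
  by (rule termdiff_converges_all) (rule cf_summ)

lemma cf_summ2: "summable (\<lambda>k. diffs (diffs (cf \<nu>)) k * u^k)"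
  by (rule termdiff_converges_all) (rule cf_summ1)

lemma GG_deriv: "(GG \<nu> has_field_derivative GG1 \<nu> u) (at u)"
  unfolding GG_def[abs_def] GG1_def
  by (rule termdiffs_strong_converges_everywhere) (rule cf_summ)

lemma GG1_deriv: "(GG1 \<nu> has_field_derivative GG2 \<nu> u) (at u)"
  unfolding GG1_def[abs_def] GG2_def
  by (rule termdiffs_strong_converges_everywhere) (rule cf_summ1)

lemma GG_ode: "4 * u * GG2 \<nu> u + 4 * (of_real \<nu> + 1) * GG1 \<nu> u + GG \<nu> u = 0"
proof -
  define e where "e = diffs (cf \<nu>)"
  define f where "f k = of_nat k * e k * u^k" for k
  have s2: "(\<lambda>k. diffs e k * u^k) sums GG2 \<nu> u"
    unfolding GG2_def e_def using cf_summ2 by (rule summable_sums)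
  have "(\<lambda>k. u * (diffs e k * u^k)) sums (u * GG2 \<nu> u)"
    by (rule sums_mult[OF s2])
  moreover have "(\<lambda>k. u * (diffs e k * u^k)) = (\<lambda>k. f (Suc k))"
    by (auto simp: f_def diffs_def)
  ultimately have "(\<lambda>k. f (Suc k)) sums (u * GG2 \<nu> u)" by simp
  then have sf: "f sums (u * GG2 \<nu> u)" using sums_Suc_iff[of f] by (simp add: f_def)
  have s1: "(\<lambda>k. e k * u^k) sums GG1 \<nu> u"
    unfolding GG1_def e_def using cf_summ1 by (rule summable_sums)
  have s0: "(\<lambda>k. cf \<nu> k * u^k) sums GG \<nu> u"
    unfolding GG_def using cf_summ by (rule summable_sums)
  have "(\<lambda>k. 4 * f k + 4 * (of_real \<nu> + 1) * (e k * u^k) + cf \<nu> k * u^k) sums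
        (4 * (u * GG2 \<nu> u) + 4 * (of_real \<nu> + 1) * GG1 \<nu> u + GG \<nu> u)"
    by (intro sums_add sums_mult sf s1 s0)
  moreover have "(\<lambda>k. 4 * f k + 4 * (of_real \<nu> + 1) * (e k * u^k) + cf \<nu> k * u^k) = (\<lambda>k. 0)"
  proof
    fix k
    have pos: "4 * (real k + 1) * (\<nu> + real k + 1) \<noteq> 0" using nu0 by auto
    have "bco \<nu> k + 4 * (real k + 1) * (\<nu> + real k + 1) * bco \<nu> (Suc k) = 0"
      using pos by (simp add: bco_rec[OF nu0])
    then have "complex_of_real (bco \<nu> k + 4 * (real k + 1) * (\<nu> + real k + 1) * bco \<nu> (Suc k)) = 0"
      by simp
    then have "cf \<nu> k + 4 * (of_nat k + 1) * (of_real \<nu> + of_nat k + 1) * cf \<nu> (Suc k) = 0"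
      by (simp add: cf_def)
    moreover have "4 * f k + 4 * (of_real \<nu> + 1) * (e k * u^k) + cf \<nu> k * u^k =
      (cf \<nu> k + 4 * (of_nat k + 1) * (of_real \<nu> + of_nat k + 1) * cf \<nu> (Suc k)) * u^k"
      unfolding f_def e_def diffs_def by (simp add: algebra_simps)
    ultimately show "4 * f k + 4 * (of_real \<nu> + 1) * (e k * u^k) + cf \<nu> k * u^k = 0"
      by simp
  qed
  ultimately show ?thesis using sums_unique sums_zero by (metis mult.assoc)
qed

end


lemma ball_half: assumes "c \<noteq> 0" "z \<in> ball c (norm c)" shows "Re (z / c) > 0"
proof -
  have "norm (z/c - 1) < 1"
  proof -
    have "z/c - 1 = (z - c)/c" using assms(1) by (simp add: field_simps)
    then have "norm (z/c - 1) = norm (z - c) / norm c" by (simp add: norm_divide)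
    also have "\<dots> < 1" using assms by (simp add: dist_norm norm_minus_commute)
    finally show ?thesis .
  qed
  moreover have "\<bar>Re (z/c - 1)\<bar> \<le> norm (z/c - 1)" by (rule abs_Re_le_cmod)
  ultimately show ?thesis by simp
qed

lemma ball_nz: assumes "c \<noteq> 0" "z \<in> ball c (norm c)" shows "z \<noteq> 0"
  using assms by (auto simp: dist_norm)

lemma PP_deriv:
  assumes "c \<noteq> 0" "z \<in> ball c (norm c)"
  shows "(cpow_br c \<nu> has_field_derivative of_real \<nu> * cpow_br c \<nu> z / z) (at z)"
proof -
  have "z / c \<notin> \<real>\<^sub>\<le>\<^sub>0" using ball_half[OF assms] by (auto simp: complex_nonpos_Reals_iff)
  then have "((\<lambda>z. exp (complex_of_real \<nu> * (Ln c + Ln (z / c)))) has_field_derivative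
     exp (complex_of_real \<nu> * (Ln c + Ln (z / c))) * (of_real \<nu> * (0 + inverse (z/c) * (1 / c)))) (at z)"
    by (intro derivative_eq_intros refl) auto
  moreover have "exp (complex_of_real \<nu> * (Ln c + Ln (z / c))) * (of_real \<nu> * (0 + inverse (z/c) * (1 / c)))
     = of_real \<nu> * cpow_br c \<nu> z / z"
    using assms ball_nz[OF assms] by (simp add: cpow_br_def field_simps)
  ultimately show ?thesis unfolding cpow_br_def[abs_def] by simp
qed

lemma PP_nz: "cpow_br c \<nu> z \<noteq> 0" by (simp add: cpow_br_def)

definition gg :: "real \<Rightarrow> complex \<Rightarrow> complex" where "gg \<nu> z = GG \<nu> (z^2)"
definition gg1 :: "real \<Rightarrow> complex \<Rightarrow> complex" where "gg1 \<nu> z = 2 * z * GG1 \<nu> (z^2)"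
definition gg2 :: "real \<Rightarrow> complex \<Rightarrow> complex" where "gg2 \<nu> z = 2 * GG1 \<nu> (z^2) + 4 * z^2 * GG2 \<nu> (z^2)"

lemma bessel_J_br_eq: "bessel_J_br c \<nu> z = cpow_br c \<nu> z / of_real (2 powr \<nu>) * gg \<nu> z"
proof -
  have "(\<lambda>k. (-1) ^ k * (z / 2) ^ (2 * k) / (fact k * complex_of_real (Gamma (\<nu> + real k + 1))))
     = (\<lambda>k. cf \<nu> k * (z^2)^k)"
  proof
    fix k
    have "(z / 2) ^ (2 * k) = (z^2)^k / 4^k" by (simp add: power_mult power_divide)
    then show "(-1) ^ k * (z / 2) ^ (2 * k) / (fact k * complex_of_real (Gamma (\<nu> + real k + 1))) = cf \<nu> k * (z^2)^k"
      by (simp add: cf_def bco_def)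
  qed
  then show ?thesis unfolding bessel_J_br_def gg_def GG_def by simp
qed

context fixes \<nu> :: real assumes nu0: "\<nu> \<ge> 0"
begin

lemma GG_chain[derivative_intros]:
  "(f has_field_derivative f') (at z within S) \<Longrightarrow> ((\<lambda>z. GG \<nu> (f z)) has_field_derivative GG1 \<nu> (f z) * f') (at z within S)"
  by (rule DERIV_chain2[OF GG_deriv[OF nu0]])

lemma GG1_chain[derivative_intros]:
  "(f has_field_derivative f') (at z within S) \<Longrightarrow> ((\<lambda>z. GG1 \<nu> (f z)) has_field_derivative GG2 \<nu> (f z) * f') (at z within S)"
  by (rule DERIV_chain2[OF GG1_deriv[OF nu0]])

lemma gg_deriv: "(gg \<nu> has_field_derivative gg1 \<nu> z) (at z within S)"
  unfolding gg_def[abs_def] gg1_def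
  by (auto intro!: derivative_eq_intros)

lemma gg1_deriv: "(gg1 \<nu> has_field_derivative gg2 \<nu> z) (at z within S)"
  unfolding gg1_def[abs_def] gg2_def
  by (auto intro!: derivative_eq_intros simp: algebra_simps power2_eq_square)

lemma gg_ode: "z * gg2 \<nu> z + (2 * of_real \<nu> + 1) * gg1 \<nu> z + z * gg \<nu> z = 0"
proof -
  have "z * gg2 \<nu> z + (2 * of_real \<nu> + 1) * gg1 \<nu> z + z * gg \<nu> z
    = z * (4 * z^2 * GG2 \<nu> (z^2) + 4 * (of_real \<nu> + 1) * GG1 \<nu> (z^2) + GG \<nu> (z^2))"
    by (simp add: gg_def gg1_def gg2_def algebra_simps)
  also have "\<dots> = 0" using GG_ode[OF nu0, of "z^2"] by simp
  finally show ?thesis .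
qed


definition J1f :: "complex \<Rightarrow> complex \<Rightarrow> complex" where
  "J1f c z = cpow_br c \<nu> z / of_real (2 powr \<nu>) * (of_real \<nu> * gg \<nu> z / z + gg1 \<nu> z)"

lemma gg2_eq: "z \<noteq> 0 \<Longrightarrow> gg2 \<nu> z = - ((2 * of_real \<nu> + 1) * gg1 \<nu> z + z * gg \<nu> z) / z"
  using gg_ode[of z] by (simp add: field_simps) (metis add.commute add_eq_0_iff mult.commute)

lemma J_deriv:
  assumes "c \<noteq> 0" "z \<in> ball c (norm c)"
  shows "(bessel_J_br c \<nu> has_field_derivative J1f c z) (at z)"
proof -
  have z: "z \<noteq> 0" by (rule ball_nz[OF assms])
  show ?thesis unfolding bessel_J_br_eq[abs_def] J1f_def
    using z by (auto intro!: derivative_eq_intros PP_deriv[OF assms] gg_deriv simp: field_simps)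
qed

lemma J1_deriv:
  assumes "c \<noteq> 0" "z \<in> ball c (norm c)"
  shows "(J1f c has_field_derivative (- J1f c z / z - (1 - (of_real \<nu>)^2 / z^2) * bessel_J_br c \<nu> z)) (at z)"
proof -
  have z: "z \<noteq> 0" by (rule ball_nz[OF assms])
  show ?thesis unfolding bessel_J_br_eq J1f_def[abs_def]
    using z by (auto intro!: derivative_eq_intros PP_deriv[OF assms] gg_deriv gg1_deriv 
        simp: field_simps gg2_eq power2_eq_square)
qed


lemma ball_scale: fixes c w :: complex assumes "\<gamma> > 0" "w \<in> ball c (norm c)"
  shows "of_real \<gamma> * w \<in> ball (of_real \<gamma> * c) (norm (of_real \<gamma> * c))"
proof -
  have "dist (of_real \<gamma> * c) (of_real \<gamma> * w) = \<gamma> * dist c w"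
    using assms(1) by (simp add: dist_norm norm_mult right_diff_distrib[symmetric] abs_of_pos)
  moreover have "norm (of_real \<gamma> * c) = \<gamma> * norm c" using assms(1) by (simp add: norm_mult)
  ultimately show ?thesis using assms by simp
qed

lemma Jg_deriv:
  assumes "c \<noteq> 0" "\<gamma> > 0" "w \<in> ball c (norm c)"
  shows "((\<lambda>w. bessel_J_br (of_real \<gamma> * c) \<nu> (of_real \<gamma> * w)) has_field_derivative
          J1f (of_real \<gamma> * c) (of_real \<gamma> * w) * of_real \<gamma>) (at w)"
proof -
  have c: "of_real \<gamma> * c \<noteq> 0" using assms by simp
  show ?thesis
    using DERIV_chain2[OF J_deriv[OF c ball_scale[OF assms(2,3)]] DERIV_cmult_Id[of "of_real \<gamma>" w UNIV]] by simp
qed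

lemma J1g_deriv:
  assumes "c \<noteq> 0" "\<gamma> > 0" "w \<in> ball c (norm c)"
  shows "((\<lambda>w. J1f (of_real \<gamma> * c) (of_real \<gamma> * w)) has_field_derivative
          (- J1f (of_real \<gamma> * c) (of_real \<gamma> * w) / (of_real \<gamma> * w) - (1 - (of_real \<nu>)^2 / (of_real \<gamma> * w)^2) *
            bessel_J_br (of_real \<gamma> * c) \<nu> (of_real \<gamma> * w)) * of_real \<gamma>) (at w)"
proof -
  have c: "of_real \<gamma> * c \<noteq> 0" using assms by simp
  show ?thesis
    using DERIV_chain2[OF J1_deriv[OF c ball_scale[OF assms(2,3)]] DERIV_cmult_Id[of "of_real \<gamma>" w UNIV]] by simp
qed

definition F0 :: "real \<Rightarrow> complex \<Rightarrow> complex \<Rightarrow> complex" where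
  "F0 \<gamma> c w = of_real \<gamma> * bessel_J_br c \<nu> w * J1f (of_real \<gamma> * c) (of_real \<gamma> * w)
      - bessel_J_br (of_real \<gamma> * c) \<nu> (of_real \<gamma> * w) * J1f c w"

definition F1 :: "real \<Rightarrow> complex \<Rightarrow> complex \<Rightarrow> complex" where
  "F1 \<gamma> c w = - F0 \<gamma> c w / w + (1 - (of_real \<gamma>)^2) * bessel_J_br c \<nu> w * bessel_J_br (of_real \<gamma> * c) \<nu> (of_real \<gamma> * w)"

definition F2 :: "real \<Rightarrow> complex \<Rightarrow> complex \<Rightarrow> complex" where
  "F2 \<gamma> c w = F0 \<gamma> c w / w^2 - F1 \<gamma> c w / w + (1 - (of_real \<gamma>)^2) *
     (J1f c w * bessel_J_br (of_real \<gamma> * c) \<nu> (of_real \<gamma> * w)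
      + of_real \<gamma> * bessel_J_br c \<nu> w * J1f (of_real \<gamma> * c) (of_real \<gamma> * w))"

definition F3 :: "real \<Rightarrow> complex \<Rightarrow> complex \<Rightarrow> complex" where
  "F3 \<gamma> c w = - 2 * F0 \<gamma> c w / w^3 + 2 * F1 \<gamma> c w / w^2 - F2 \<gamma> c w / w + (1 - (of_real \<gamma>)^2) *
     ((- J1f c w / w - (1 - (of_real \<nu>)^2 / w^2) * bessel_J_br c \<nu> w) * bessel_J_br (of_real \<gamma> * c) \<nu> (of_real \<gamma> * w)
      + 2 * of_real \<gamma> * J1f c w * J1f (of_real \<gamma> * c) (of_real \<gamma> * w)
      + (of_real \<gamma>)^2 * bessel_J_br c \<nu> w * (- J1f (of_real \<gamma> * c) (of_real \<gamma> * w) / (of_real \<gamma> * w) - (1 - (of_real \<nu>)^2 / (of_real \<gamma> * w)^2) *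
            bessel_J_br (of_real \<gamma> * c) \<nu> (of_real \<gamma> * w)))"

context fixes \<gamma> :: real and c :: complex assumes gam: "\<gamma> > 0" and c0: "c \<noteq> 0"
begin

lemma F_derivs: assumes "w \<in> ball c (norm c)"
  shows "(F0 \<gamma> c has_field_derivative F1 \<gamma> c w) (at w)"
    "(F1 \<gamma> c has_field_derivative F2 \<gamma> c w) (at w)"
    "(F2 \<gamma> c has_field_derivative F3 \<gamma> c w) (at w)"
proof -
  have w: "w \<noteq> 0" by (rule ball_nz[OF c0 assms])
  define A where "A = bessel_J_br c \<nu>"
  define A1 where "A1 = J1f c"
  define B where "B = (\<lambda>w. bessel_J_br (of_real \<gamma> * c) \<nu> (of_real \<gamma> * w))"
  define B1 where "B1 = (\<lambda>w. J1f (of_real \<gamma> * c) (of_real \<gamma> * w))"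
  define g where "g = (of_real \<gamma> :: complex)"
  define n where "n = (of_real \<nu> :: complex)"
  have g0: "g \<noteq> 0" using gam by (simp add: g_def)
  have dA: "(A has_field_derivative A1 w) (at w)" unfolding A_def A1_def by (rule J_deriv[OF c0 assms])
  have dA1: "(A1 has_field_derivative (- A1 w / w - (1 - n^2 / w^2) * A w)) (at w)"
    unfolding A_def A1_def n_def by (rule J1_deriv[OF c0 assms])
  have dB: "(B has_field_derivative B1 w * g) (at w)" unfolding B_def B1_def g_def by (rule Jg_deriv[OF c0 gam assms])
  have dB1: "(B1 has_field_derivative (- B1 w / (g * w) - (1 - n^2 / (g * w)^2) * B w) * g) (at w)"
    unfolding B_def B1_def g_def n_def by (rule J1g_deriv[OF c0 gam assms])
  have e0: "F0 \<gamma> c = (\<lambda>w. g * A w * B1 w - B w * A1 w)"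
    by (simp add: F0_def[abs_def] A_def A1_def B_def B1_def g_def)
  have e1: "F1 \<gamma> c = (\<lambda>w. - F0 \<gamma> c w / w + (1 - g^2) * A w * B w)"
    by (simp add: F1_def[abs_def] A_def B_def g_def)
  have e2: "F2 \<gamma> c = (\<lambda>w. F0 \<gamma> c w / w^2 - F1 \<gamma> c w / w + (1 - g^2) * (A1 w * B w + g * A w * B1 w))"
    by (simp add: F2_def[abs_def] A_def A1_def B_def B1_def g_def)
  have e3: "F3 \<gamma> c w = - 2 * F0 \<gamma> c w / w^3 + 2 * F1 \<gamma> c w / w^2 - F2 \<gamma> c w / w + (1 - g^2) *
     ((- A1 w / w - (1 - n^2 / w^2) * A w) * B w + 2 * g * A1 w * B1 w
      + g^2 * A w * (- B1 w / (g * w) - (1 - n^2 / (g * w)^2) * B w))"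
    by (simp add: F3_def A_def A1_def B_def B1_def g_def n_def)
  show d0: "(F0 \<gamma> c has_field_derivative F1 \<gamma> c w) (at w)"
    unfolding e0 e1 using w g0
    by (auto intro!: derivative_eq_intros dA dA1 dB dB1 simp: field_simps power2_eq_square)
  have d1: "(F1 \<gamma> c has_field_derivative F2 \<gamma> c w) (at w)"
    unfolding e1[abs_def] e2 using w g0
    by (auto intro!: derivative_eq_intros dA dB d0 simp: field_simps power2_eq_square e1)
  then show "(F1 \<gamma> c has_field_derivative F2 \<gamma> c w) (at w)" .
  show "(F2 \<gamma> c has_field_derivative F3 \<gamma> c w) (at w)"
    unfolding e2 e3 using w g0
    by (auto intro!: derivative_eq_intros dA dA1 dB dB1 d0 d1 simp: field_simps power2_eq_square power3_eq_cube e1 e2)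
qed

end

end


lemma ray_contra:
  fixes v :: "real \<Rightarrow> real" and G :: "real \<Rightarrow> complex" and K b :: real
  assumes b: "b > 0" and dv: "\<And>t. DERIV v t :> K * t^m * (cmod (G t))^2" and K: "K \<noteq> 0"
    and vb: "v b = v 0" and G0: "G 0 \<noteq> 0" and cG: "isCont G 0"
  shows False
proof -
  have "G \<midarrow>0\<rightarrow> G 0" using cG by (simp add: isCont_def)
  from LIM_D[OF this, of "cmod (G 0)"] G0 obtain d where d: "d > 0"
    and hd: "\<And>x. x \<noteq> 0 \<and> norm x < d \<Longrightarrow> cmod (G x - G 0) < cmod (G 0)" by auto
  have Gnz: "G x \<noteq> 0" if "0 < x" "x < d" for x
    using hd[of x] that by auto
  define a where "a = min (d/2) (b/2)"
  have a: "0 < a" "a < d" "a < b" using d b by (auto simp: a_def)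
  define h where "h t = K * v t" for t
  have dh: "DERIV h t :> K * (K * t^m * (cmod (G t))^2)" for t
    unfolding h_def[abs_def] by (intro DERIV_cmult dv)
  from MVT2[OF a(1), of h, OF dh] obtain x where x: "0 < x" "x < a"
    and hx: "h a - h 0 = (a - 0) * (K * (K * x^m * (cmod (G x))^2))" by auto
  have "G x \<noteq> 0" using Gnz[of x] x a by auto
  then have "K * (K * x^m * (cmod (G x))^2) > 0" using K x
    by (metis (no_types, lifting) mult.assoc mult_pos_pos not_real_square_gt_zero
       zero_less_power zero_less_norm_iff)
  then have h1: "h a - h 0 > 0" using hx a by simp
  from MVT2[OF a(3), of h, OF dh] obtain y where y: "a < y" "y < b"
    and hy: "h b - h a = (b - a) * (K * (K * y^m * (cmod (G y))^2))" by auto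
  have "K * (K * y^m * (cmod (G y))^2) \<ge> 0" using y a by (simp add: mult.assoc[symmetric])
  then have "h b - h a \<ge> 0" using hy a by simp
  with h1 have "h b > h 0" by simp
  then show False using vb by (simp add: h_def)
qed

lemma DERIV_Im_real:
  assumes "(f has_field_derivative D) (at (complex_of_real t))"
  shows "((\<lambda>t. Im (f (of_real t))) has_real_derivative Im D) (at t)"
proof -
  have "((\<lambda>x. f (of_real x)) has_vector_derivative D) (at t)"
    by (rule has_vector_derivative_real_field[OF assms])
  from bounded_linear.has_vector_derivative[OF bounded_linear_Im this]
  show ?thesis by (simp add: has_real_derivative_iff_has_vector_derivative)
qed

lemma DERIV_Re_real:
  assumes "(f has_field_derivative D) (at (complex_of_real t))"
  shows "((\<lambda>t. Re (f (of_real t))) has_real_derivative Re D) (at t)"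
proof -
  have "((\<lambda>x. f (of_real x)) has_vector_derivative D) (at t)"
    by (rule has_vector_derivative_real_field[OF assms])
  from bounded_linear.has_vector_derivative[OF bounded_linear_Re this]
  show ?thesis by (simp add: has_real_derivative_iff_has_vector_derivative)
qed


context fixes \<nu> :: real and k :: nat assumes nu0: "\<nu> \<ge> 0" and km: "real (Suc k) = 2 * \<nu> + 1"
begin

lemma gg_chain[derivative_intros]:
  "(f has_field_derivative f') (at z within S) \<Longrightarrow> ((\<lambda>z. gg \<nu> (f z)) has_field_derivative gg1 \<nu> (f z) * f') (at z within S)"
  by (rule DERIV_chain2[OF gg_deriv[OF nu0]])

lemma gg1_chain[derivative_intros]:
  "(f has_field_derivative f') (at z within S) \<Longrightarrow> ((\<lambda>z. gg1 \<nu> (f z)) has_field_derivative gg2 \<nu> (f z) * f') (at z within S)"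
  by (rule DERIV_chain2[OF gg1_deriv[OF nu0]])

lemma km_c: "(of_nat (Suc k) :: complex) = 2 * of_real \<nu> + 1"
proof -
  have "(of_nat (Suc k) :: complex) = of_real (real (Suc k))" by simp
  also have "\<dots> = of_real (2 * \<nu> + 1)" using km by simp
  finally show ?thesis by simp
qed

lemma W_deriv:
  "((\<lambda>z. z^Suc k * (\<alpha> * gg1 \<nu> (\<alpha>*z) * gg \<nu> (\<beta>*z) - \<beta> * gg \<nu> (\<alpha>*z) * gg1 \<nu> (\<beta>*z)))
     has_field_derivative ((\<beta>^2 - \<alpha>^2) * z^Suc k * gg \<nu> (\<alpha>*z) * gg \<nu> (\<beta>*z))) (at z)"
proof -
  have o1: "(\<alpha>*z) * gg2 \<nu> (\<alpha>*z) + (2 * of_real \<nu> + 1) * gg1 \<nu> (\<alpha>*z) + (\<alpha>*z) * gg \<nu> (\<alpha>*z) = 0"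
    by (rule gg_ode[OF nu0])
  have o2: "(\<beta>*z) * gg2 \<nu> (\<beta>*z) + (2 * of_real \<nu> + 1) * gg1 \<nu> (\<beta>*z) + (\<beta>*z) * gg \<nu> (\<beta>*z) = 0"
    by (rule gg_ode[OF nu0])
  have kk: "(1 + of_nat k :: complex) = 2 * of_real \<nu> + 1" using km_c by simp
  have pk: "(of_nat k :: complex) * z^(k - Suc 0) * z = of_nat k * z^k"
    by (cases k) auto
  have alg: "\<And>p. (p + of_nat k * p) *
     (\<alpha> * gg1 \<nu> (\<alpha> * z) * gg \<nu> (\<beta> * z) - \<beta> * gg \<nu> (\<alpha> * z) * gg1 \<nu> (\<beta> * z)) +
     (gg2 \<nu> (\<alpha> * z) * \<alpha> * \<alpha> * gg \<nu> (\<beta> * z) -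
      gg2 \<nu> (\<beta> * z) * \<beta> * (\<beta> * gg \<nu> (\<alpha> * z))) *
     (z * p) =
     (\<beta>\<^sup>2 - \<alpha>\<^sup>2) * (z * p) * gg \<nu> (\<alpha> * z) * gg \<nu> (\<beta> * z)"
    using o1 o2 kk by algebra
  show ?thesis
    apply (auto intro!: derivative_eq_intros)
    apply (simp only: pk)
    apply (rule alg)
    done
qed

lemma E_deriv:
  "((\<lambda>z. z^Suc (Suc k) * ((gg1 \<nu> z)^2 + (gg \<nu> z)^2) + 2 * of_real \<nu> * z^Suc k * gg \<nu> z * gg1 \<nu> z)
     has_field_derivative (2 * z^Suc k * (gg \<nu> z)^2)) (at z)"
proof -
  have o1: "z * gg2 \<nu> z + (2 * of_real \<nu> + 1) * gg1 \<nu> z + z * gg \<nu> z = 0"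
    by (rule gg_ode[OF nu0])
  have kk: "(1 + of_nat k :: complex) = 2 * of_real \<nu> + 1" using km_c by simp
  have pk: "(of_nat k :: complex) * z^(k - Suc 0) * z = of_nat k * z^k"
    by (cases k) auto
  have alg: "\<And>p. (z * p + (p + of_nat k * p) * z) *
     ((gg1 \<nu> z)\<^sup>2 + (gg \<nu> z)\<^sup>2) +
     (2 * (gg2 \<nu> z * gg1 \<nu> z) + 2 * (gg1 \<nu> z * gg \<nu> z)) * (z * (z * p)) +
     (((p + of_nat k * p) *
       (2 * complex_of_real \<nu>) *
       gg \<nu> z +
       gg1 \<nu> z * (2 * complex_of_real \<nu> * (z * p))) *
      gg1 \<nu> z +
      gg2 \<nu> z * (2 * complex_of_real \<nu> * (z * p) * gg \<nu> z)) =
     2 * (z * p) * (gg \<nu> z)\<^sup>2"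
    using o1 kk by algebra
  show ?thesis
    apply (auto intro!: derivative_eq_intros gg_deriv[OF nu0] gg1_deriv[OF nu0])
    apply (simp only: pk)
    apply (rule alg)
    done
qed


lemma GG_cnj: "GG \<nu> (cnj u) = cnj (GG \<nu> u)"
proof -
  have "(\<lambda>n. cf \<nu> n * u^n) sums GG \<nu> u" unfolding GG_def by (rule summable_sums[OF cf_summ[OF nu0]])
  then have "(\<lambda>n. cnj (cf \<nu> n * u^n)) sums cnj (GG \<nu> u)" by (simp only: sums_cnj)
  moreover have "(\<lambda>n. cnj (cf \<nu> n * u^n)) = (\<lambda>n. cf \<nu> n * (cnj u)^n)" by (simp add: cf_def)
  ultimately have "(\<lambda>n. cf \<nu> n * (cnj u)^n) sums cnj (GG \<nu> u)" by simp
  then show ?thesis unfolding GG_def by (simp add: sums_iff)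
qed

lemma gg_cnj: "gg \<nu> (cnj z) = cnj (gg \<nu> z)"
  unfolding gg_def by (simp add: GG_cnj[symmetric])

lemma GG_negpos: assumes "s > 0" shows "GG \<nu> (of_real (- s)) \<noteq> 0"
proof -
  have sr: "summable (\<lambda>n. bco \<nu> n * (- s)^n)" using bco_summable[OF nu0, of "-s"] by simp
  have "(\<lambda>n. of_real (bco \<nu> n * (- s)^n) :: complex) sums of_real (\<Sum>n. bco \<nu> n * (- s)^n)"
    by (rule sums_of_real[OF summable_sums[OF sr]])
  then have e: "GG \<nu> (of_real (- s)) = of_real (\<Sum>n. bco \<nu> n * (- s)^n)"
    unfolding GG_def cf_def by (simp add: sums_iff)
  have nn: "0 \<le> bco \<nu> n * (- s)^n" for n
  proof -
    have "bco \<nu> n * (- s)^n = s^n / (4^n * fact n * Gamma (\<nu> + real n + 1))"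
      by (simp add: bco_def power_minus' field_simps)
    moreover have "Gamma (\<nu> + real n + 1) > 0" using nu0 by (intro Gamma_real_pos) auto
    ultimately show ?thesis using assms by simp
  qed
  have "0 < bco \<nu> 0 * (- s)^0" using nu0 by (simp add: bco_def)
  then have "0 < (\<Sum>n. bco \<nu> n * (- s)^n)" by (rule suminf_pos2[OF sr nn])
  then show ?thesis using e by simp
qed

lemma gg0: "gg \<nu> 0 \<noteq> 0"
proof -
  have "gg \<nu> 0 = cf \<nu> 0" unfolding gg_def GG_def by simp
  moreover have "Gamma (\<nu> + 1) > 0" using nu0 by (intro Gamma_real_pos) auto
  ultimately show ?thesis by (simp add: cf_def bco_def)
qed

lemma gg_cont: "isCont (gg \<nu>) z"
  by (rule DERIV_isCont[OF gg_deriv[OF nu0]])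

lemma gg_zero_Im: assumes "gg \<nu> \<alpha> = 0" shows "Im (\<alpha>^2) = 0"
proof (rule ccontr)
  assume ne: "Im (\<alpha>^2) \<noteq> 0"
  define \<beta> where "\<beta> = cnj \<alpha>"
  define W where "W z = z^Suc k * (\<alpha> * gg1 \<nu> (\<alpha>*z) * gg \<nu> (\<beta>*z) - \<beta> * gg \<nu> (\<alpha>*z) * gg1 \<nu> (\<beta>*z))" for z
  define v where "v t = Im (W (of_real t))" for t
  define G where "G t = gg \<nu> (\<alpha> * of_real t)" for t
  have gb: "gg \<nu> (\<beta> * of_real t) = cnj (G t)" for t
    by (simp add: G_def \<beta>_def gg_cnj[symmetric])
  have dv: "DERIV v t :> (- 2 * Im (\<alpha>^2)) * t^Suc k * (cmod (G t))^2" for t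
  proof -
    have "DERIV v t :> Im ((\<beta>^2 - \<alpha>^2) * (of_real t)^Suc k * gg \<nu> (\<alpha> * of_real t) * gg \<nu> (\<beta> * of_real t))"
      unfolding v_def W_def[abs_def] by (rule DERIV_Im_real[OF W_deriv])
    moreover have e1: "(\<beta>^2 - \<alpha>^2) * (of_real t)^Suc k * gg \<nu> (\<alpha> * of_real t) * gg \<nu> (\<beta> * of_real t)
       = (\<beta>^2 - \<alpha>^2) * of_real (t^Suc k * (cmod (G t))^2)"
      using complex_mult_cnj[of "G t"] by (simp add: gb G_def[symmetric] cmod_power2)
    moreover have e2: "Im ((\<beta>^2 - \<alpha>^2) * of_real (t^Suc k * (cmod (G t))^2)) = (- 2 * Im (\<alpha>^2)) * t^Suc k * (cmod (G t))^2"
      by (simp add: \<beta>_def power2_eq_square)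
    ultimately show ?thesis by (metis DERIV_cong)
  qed
  have v1: "v 1 = v 0"
    using assms by (simp add: v_def W_def \<beta>_def gg_cnj)
  have G0: "G 0 \<noteq> 0" using gg0 by (simp add: G_def)
  have cG: "isCont G 0" unfolding G_def
    by (rule isCont_o2[OF _ gg_cont]) (intro continuous_intros)
  show False using ray_contra[where b=1 and v=v and G=G and K="- 2 * Im (\<alpha>^2)" and m="Suc k", OF _ dv _ v1 G0 cG] ne by simp
qed

lemma gg_zero_real: assumes "gg \<nu> \<alpha> = 0" shows "Im \<alpha> = 0"
proof (rule ccontr)
  assume ne: "Im \<alpha> \<noteq> 0"
  have "Im (\<alpha>^2) = 2 * Re \<alpha> * Im \<alpha>" by (simp add: power2_eq_square)
  with gg_zero_Im[OF assms] ne have re: "Re \<alpha> = 0" by simp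
  then have "\<alpha>^2 = of_real (- ((Im \<alpha>)^2))" by (simp add: complex_eq_iff power2_eq_square)
  then have "gg \<nu> \<alpha> = GG \<nu> (of_real (- ((Im \<alpha>)^2)))" by (simp add: gg_def)
  moreover have "GG \<nu> (of_real (- ((Im \<alpha>)^2))) \<noteq> 0" using ne by (intro GG_negpos) simp
  ultimately show False using assms by simp
qed

lemma gg_simple_pos: assumes "r > 0" "gg \<nu> (of_real r) = 0" "gg1 \<nu> (of_real r) = 0" shows False
proof -
  define E where "E z = z^Suc (Suc k) * ((gg1 \<nu> z)^2 + (gg \<nu> z)^2) + 2 * of_real \<nu> * z^Suc k * gg \<nu> z * gg1 \<nu> z" for z
  define v where "v t = Re (E (of_real t))" for t
  define G where "G t = gg \<nu> (of_real t)" for t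
  have Gr: "Im (G t) = 0" for t
  proof -
    have "G t = cnj (G t)" unfolding G_def by (metis complex_cnj_complex_of_real gg_cnj)
    then show ?thesis by (metis complex_cnj_cancel_iff complex_is_Real_iff Reals_cnj_iff)
  qed
  have dv: "DERIV v t :> 2 * t^Suc k * (cmod (G t))^2" for t
  proof -
    have "DERIV v t :> Re (2 * (of_real t)^Suc k * (gg \<nu> (of_real t))^2)"
      unfolding v_def E_def[abs_def] by (rule DERIV_Re_real[OF E_deriv])
    moreover have "Re (2 * (of_real t)^Suc k * (gg \<nu> (of_real t))^2) = 2 * t^Suc k * (cmod (G t))^2"
    proof -
      have "(cmod (G t))^2 = (Re (G t))^2" using Gr[of t] by (simp add: cmod_power2)
      moreover have "Re ((G t)^2) = (Re (G t))^2" using Gr[of t] by (simp add: power2_eq_square)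
      moreover have "Re (2 * (of_real t)^Suc k * (G t)^2) = 2 * t^Suc k * Re ((G t)^2)"
        by simp
      ultimately show ?thesis by (simp add: G_def)
    qed
    ultimately show ?thesis by (metis DERIV_cong)
  qed
  have v1: "v r = v 0" using assms by (simp add: v_def E_def)
  have G0: "G 0 \<noteq> 0" using gg0 by (simp add: G_def)
  have cG: "isCont G 0" unfolding G_def
    by (rule isCont_o2[OF _ gg_cont]) (intro continuous_intros)
  show False by (rule ray_contra[OF assms(1) dv _ v1 G0 cG]) simp
qed

lemma gg_simple: assumes "gg \<nu> z = 0" shows "gg1 \<nu> z \<noteq> 0"
proof
  assume g1: "gg1 \<nu> z = 0"
  have "Im z = 0" by (rule gg_zero_real[OF assms])
  then obtain r where zr: "z = of_real r" by (metis complex_is_Real_iff Reals_cases)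
  have "r \<noteq> 0" using assms gg0 zr by auto
  then consider "r > 0" | "- r > 0" by linarith
  then show False
  proof cases
    case 1 then show False using gg_simple_pos[of r] assms g1 zr by simp
  next
    case 2
    have "gg \<nu> (of_real (- r)) = 0" using assms zr by (simp add: gg_def)
    moreover have "gg1 \<nu> (of_real (- r)) = 0" using g1 zr by (simp add: gg1_def)
    ultimately show False using gg_simple_pos[OF 2] by simp
  qed
qed

end


lemma funpow3: "(deriv ^^ 3) f = deriv (deriv (deriv f))" by (simp add: numeral_3_eq_3)
lemma funpow2: "(deriv ^^ 2) f = deriv (deriv f)" by (simp add: numeral_2_eq_2)

context fixes \<nu> :: real and k :: nat and \<gamma> :: real and c :: complex
  assumes nu0: "\<nu> \<ge> 0" and km: "real (Suc k) = 2 * \<nu> + 1" and gam: "\<gamma> > 0" and c0: "c \<noteq> 0"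
begin

lemma J_zero_iff: "d \<noteq> 0 \<Longrightarrow> bessel_J_br d \<nu> d = 0 \<longleftrightarrow> gg \<nu> d = 0"
  by (simp add: bessel_J_br_eq PP_nz)

lemma J1_nz: "d \<noteq> 0 \<Longrightarrow> gg \<nu> d = 0 \<Longrightarrow> J1f \<nu> d d \<noteq> 0"
  using gg_simple[OF nu0 km, of d] unfolding J1f_def[OF nu0] by (simp add: PP_nz)

lemma F_iter:
  "F_br c \<gamma> \<nu> c = F0 \<nu> \<gamma> c c" "(deriv ^^ 1) (F_br c \<gamma> \<nu>) c = F1 \<nu> \<gamma> c c"
  "(deriv ^^ 2) (F_br c \<gamma> \<nu>) c = F2 \<nu> \<gamma> c c" "(deriv ^^ 3) (F_br c \<gamma> \<nu>) c = F3 \<nu> \<gamma> c c"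
proof -
  define S where "S = ball c (norm c)"
  have oS: "open S" by (simp add: S_def)
  have cS: "c \<in> S" using c0 by (simp add: S_def)
  have eq0: "F0 \<nu> \<gamma> c w = F_br c \<gamma> \<nu> w" if "w \<in> S" for w
  proof -
    have w: "w \<in> ball c (norm c)" using that by (simp add: S_def)
    have "deriv (bessel_J_br (of_real \<gamma> * c) \<nu>) (of_real \<gamma> * w) = J1f \<nu> (of_real \<gamma> * c) (of_real \<gamma> * w)"
      by (rule DERIV_imp_deriv[OF J_deriv[OF nu0 _ ball_scale[OF nu0 gam w]]]) (use c0 gam in simp)
    moreover have "deriv (bessel_J_br c \<nu>) w = J1f \<nu> c w"
      by (rule DERIV_imp_deriv[OF J_deriv[OF nu0 c0 w]])
    ultimately show ?thesis by (simp add: F_br_def F0_def[OF nu0])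
  qed
  have eq1: "F1 \<nu> \<gamma> c w = deriv (F_br c \<gamma> \<nu>) w" if "w \<in> S" for w
  proof -
    have w: "w \<in> ball c (norm c)" using that by (simp add: S_def)
    show ?thesis
      by (rule DERIV_imp_deriv[OF has_field_derivative_transform_within_open[OF F_derivs(1)[OF nu0 gam c0 w] oS that eq0], symmetric])
  qed
  have eq2: "F2 \<nu> \<gamma> c w = deriv (deriv (F_br c \<gamma> \<nu>)) w" if "w \<in> S" for w
  proof -
    have w: "w \<in> ball c (norm c)" using that by (simp add: S_def)
    show ?thesis
      by (rule DERIV_imp_deriv[OF has_field_derivative_transform_within_open[OF F_derivs(2)[OF nu0 gam c0 w] oS that eq1], symmetric])
  qed
  have eq3: "F3 \<nu> \<gamma> c c = deriv (deriv (deriv (F_br c \<gamma> \<nu>))) c"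
    by (rule DERIV_imp_deriv[OF has_field_derivative_transform_within_open[OF F_derivs(3)[OF nu0 gam c0] oS cS eq2], symmetric])
      (use cS in \<open>simp add: S_def\<close>)
  show "F_br c \<gamma> \<nu> c = F0 \<nu> \<gamma> c c" using eq0[OF cS] by simp
  show "(deriv ^^ 1) (F_br c \<gamma> \<nu>) c = F1 \<nu> \<gamma> c c" using eq1[OF cS] by simp
  show "(deriv ^^ 2) (F_br c \<gamma> \<nu>) c = F2 \<nu> \<gamma> c c" using eq2[OF cS] by (simp add: funpow2)
  show "(deriv ^^ 3) (F_br c \<gamma> \<nu>) c = F3 \<nu> \<gamma> c c" using eq3 by (simp add: funpow3)
qed

end


lemma zm1: "zero_mult f z 1 \<longleftrightarrow> f z = 0 \<and> (deriv ^^ 1) f z \<noteq> 0"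
  by (simp add: zero_mult_def)

lemma zm3: "zero_mult f z 3 \<longleftrightarrow> f z = 0 \<and> (deriv ^^ 1) f z = 0 \<and> (deriv ^^ 2) f z = 0 \<and> (deriv ^^ 3) f z \<noteq> 0"
proof -
  have "(\<forall>k<3. P k) \<longleftrightarrow> P 0 \<and> P 1 \<and> P 2" for P :: "nat \<Rightarrow> bool"
    by (auto simp: numeral_3_eq_3 numeral_2_eq_2 less_Suc_eq)
  then show ?thesis unfolding zero_mult_def by simp
qed

lemma main_aux:
  fixes \<nu> \<gamma> :: real and k :: nat and z0 :: complex
  assumes nu0: "\<nu> \<ge> 0" and km: "real (Suc k) = 2 * \<nu> + 1" and gam: "\<gamma> > 0" and g1: "\<gamma> \<noteq> 1"
    and c0: "z0 \<noteq> 0" and F0: "F_br z0 \<gamma> \<nu> z0 = 0"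
  shows "(zero_mult (F_br z0 \<gamma> \<nu>) z0 1 \<or> zero_mult (F_br z0 \<gamma> \<nu>) z0 3)
       \<and> (zero_mult (F_br z0 \<gamma> \<nu>) z0 3 \<longleftrightarrow> bessel_J \<nu> z0 = 0 \<and> bessel_J \<nu> (of_real \<gamma> * z0) = 0)
       \<and> (zero_mult (F_br z0 \<gamma> \<nu>) z0 3 \<longrightarrow> z0 \<in> \<real>)"
proof -
  note it = F_iter[OF nu0 km gam c0]
  define A where "A = bessel_J_br z0 \<nu> z0"
  define B where "B = bessel_J_br (of_real \<gamma> * z0) \<nu> (of_real \<gamma> * z0)"
  define A1 where "A1 = J1f \<nu> z0 z0"
  define B1 where "B1 = J1f \<nu> (of_real \<gamma> * z0) (of_real \<gamma> * z0)"
  define g where "g = (of_real \<gamma> :: complex)"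
  have gz: "g \<noteq> 0" using gam by (simp add: g_def)
  have gz0: "of_real \<gamma> * z0 \<noteq> 0" using gam c0 by simp
  have q: "1 - g^2 \<noteq> 0"
  proof
    assume "1 - g^2 = 0"
    then have "(of_real (\<gamma>^2) :: complex) = 1" by (metis g_def of_real_power right_minus_eq)
    then have "\<gamma>^2 = 1" by (metis of_real_eq_1_iff)
    then show False using gam g1 by (simp add: power2_eq_1_iff)
  qed
  have e0: "F0 \<nu> \<gamma> z0 z0 = g * A * B1 - B * A1"
    by (simp add: F0_def[OF nu0] A_def B_def A1_def B1_def g_def)
  have h0: "g * A * B1 - B * A1 = 0" using F0 it(1) e0 by simp
  have e1: "F1 \<nu> \<gamma> z0 z0 = (1 - g^2) * A * B"
    using h0 e0 by (simp add: F1_def[OF nu0] A_def B_def g_def)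
  have e2: "F2 \<nu> \<gamma> z0 z0 = - F1 \<nu> \<gamma> z0 z0 / z0 + (1 - g^2) * (A1 * B + g * A * B1)"
    using h0 e0 by (simp add: F2_def[OF nu0] A_def B_def A1_def B1_def g_def)
  have e3: "F3 \<nu> \<gamma> z0 z0 = 2 * F1 \<nu> \<gamma> z0 z0 / z0^2 - F2 \<nu> \<gamma> z0 z0 / z0 + (1 - g^2) *
     ((- A1 / z0 - (1 - (of_real \<nu>)^2 / z0^2) * A) * B + 2 * g * A1 * B1
      + g^2 * A * (- B1 / (g * z0) - (1 - (of_real \<nu>)^2 / (g * z0)^2) * B))"
    using h0 e0 by (simp add: F3_def[OF nu0] A_def B_def A1_def B1_def g_def)
  have AZ: "A = 0 \<Longrightarrow> A1 \<noteq> 0"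
    unfolding A_def A1_def using J_zero_iff[OF nu0 km gam c0 c0] J1_nz[OF nu0 km gam c0 c0] by simp
  have BZ: "B = 0 \<Longrightarrow> B1 \<noteq> 0"
    unfolding B_def B1_def using J_zero_iff[OF nu0 km gam c0 gz0] J1_nz[OF nu0 km gam c0 gz0] by simp
  have AR: "A = 0 \<Longrightarrow> z0 \<in> \<real>"
  proof -
    assume "A = 0"
    then have "gg \<nu> z0 = 0" unfolding A_def using J_zero_iff[OF nu0 km gam c0 c0] by simp
    then have "Im z0 = 0" by (rule gg_zero_real[OF nu0 km])
    then show ?thesis by (simp add: complex_is_Real_iff)
  qed
  have bA: "bessel_J \<nu> z0 = A" by (simp add: bessel_J_def A_def)
  have bB: "bessel_J \<nu> (of_real \<gamma> * z0) = B" by (simp add: bessel_J_def B_def)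
  show ?thesis
  proof (cases "A * B = 0")
    case False
    then have "(deriv ^^ 1) (F_br z0 \<gamma> \<nu>) z0 \<noteq> 0" using it(2) e1 q by simp
    then have "zero_mult (F_br z0 \<gamma> \<nu>) z0 1" "\<not> zero_mult (F_br z0 \<gamma> \<nu>) z0 3"
      using F0 by (subst zm1 zm3, simp)+
    then show ?thesis using False bA bB by auto
  next
    case True
    have AB: "A = 0 \<and> B = 0"
    proof (cases "A = 0")
      case True
      then have "B * A1 = 0" using h0 by simp
      then show ?thesis using AZ True by simp
    next
      case False
      then have "B = 0" using \<open>A * B = 0\<close> by simp
      then have "g * A * B1 = 0" using h0 by simp
      then show ?thesis using BZ \<open>B = 0\<close> gz False by simp
    qed
    have d1: "(deriv ^^ 1) (F_br z0 \<gamma> \<nu>) z0 = 0" using it(2) e1 AB by simp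
    have d2: "(deriv ^^ 2) (F_br z0 \<gamma> \<nu>) z0 = 0" using it(3) e2 e1 AB by simp
    have "F3 \<nu> \<gamma> z0 z0 = (1 - g^2) * (2 * g * A1 * B1)" using e3 e2 e1 AB by simp
    moreover have "A1 \<noteq> 0" "B1 \<noteq> 0" using AZ BZ AB by auto
    ultimately have d3: "(deriv ^^ 3) (F_br z0 \<gamma> \<nu>) z0 \<noteq> 0" using it(4) q gz by simp
    have "zero_mult (F_br z0 \<gamma> \<nu>) z0 3" "\<not> zero_mult (F_br z0 \<gamma> \<nu>) z0 1"
      using F0 d1 d2 d3 by (subst zm1 zm3, simp)+
    then show ?thesis using AB bA bB AR by auto
  qed
qed

theorem mainTheorem11:
  fixes \<gamma> :: real and l n :: nat and z0 :: complex
  assumes "\<gamma> > 0" and "\<gamma> \<noteq> 1" and "n \<ge> 2" and "z0 \<noteq> 0"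
    and "F_br z0 \<gamma> (real l + real n / 2 - 1) z0 = 0"
  shows "(zero_mult (F_br z0 \<gamma> (real l + real n / 2 - 1)) z0 1
          \<or> zero_mult (F_br z0 \<gamma> (real l + real n / 2 - 1)) z0 3)
       \<and> (zero_mult (F_br z0 \<gamma> (real l + real n / 2 - 1)) z0 3 \<longleftrightarrow>
           bessel_J (real l + real n / 2 - 1) z0 = 0
           \<and> bessel_J (real l + real n / 2 - 1) (of_real \<gamma> * z0) = 0)
       \<and> (zero_mult (F_br z0 \<gamma> (real l + real n / 2 - 1)) z0 3 \<longrightarrow> z0 \<in> \<real>)"
proof (rule main_aux[where k = "2 * l + n - 2"])
  show "real l + real n / 2 - 1 \<ge> 0" using assms(3) by simp
  have "Suc (2 * l + n - 2) = 2 * l + n - 1" using assms(3) by simp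
  then have "real (Suc (2 * l + n - 2)) = real (2 * l + n) - 1" using assms(3) by (simp add: of_nat_diff)
  then show "real (Suc (2 * l + n - 2)) = 2 * (real l + real n / 2 - 1) + 1" by simp
qed (use assms in auto)

end
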